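(* Let $(X_n)_{n\ge0}$ be a discrete-time Markov chain on a finite state space $\Sigma$ with transition matrix $P$, initial distribution $\nu$, mixing time $T$ and invariant distribution $\pi$. Then for every $n\ge1$, every $f:\Sigma\to[-1,1]$ with $\pi(f)=0$ and $\pi(f^2)\le\sigma^2$, and every $\gamma\in(0,\sigma^2\wedge\frac12]$, $$\mathbb P\Big[\sum_{i<n}f(X_i)\ge n\gamma\Big]\le4\exp\Big\{-\Big\lfloor\frac n{k(\gamma)T}-1\Big\rfloor\frac{\gamma^2}{6\sigma^2}\Big\},$$ where $k(\gamma)=-\log_2(\pi_\star\gamma^2/(6\sigma^2))$ and $\pi_\star=\min_{x\in\Sigma}\pi(x)$.
   Context: The mixing time is $T=\min\{n\ge0:\max_{x\in\Sigma}\|P^n(x,\cdot)-\pi\|_{TV}\le1/4\}$ with $\|\nu-\nu'\|_{TV}=\frac12\sum_x|\nu(x)-\nu'(x)|$. $\pi(f)=\sum_x\pi(x)f(x)$. *)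

theory Defs
  imports Complex_Main
begin

definition stochastic :: "('a::finite \<Rightarrow> 'a \<Rightarrow> real) \<Rightarrow> bool" where
  "stochastic P \<longleftrightarrow> (\<forall>x y. 0 \<le> P x y) \<and> (\<forall>x. (\<Sum>y\<in>UNIV. P x y) = 1)"

definition distribution :: "('a::finite \<Rightarrow> real) \<Rightarrow> bool" where
  "distribution \<mu> \<longleftrightarrow> (\<forall>x. 0 \<le> \<mu> x) \<and> (\<Sum>x\<in>UNIV. \<mu> x) = 1"

definition invariant :: "('a::finite \<Rightarrow> 'a \<Rightarrow> real) \<Rightarrow> ('a \<Rightarrow> real) \<Rightarrow> bool" where
  "invariant P \<pi> \<longleftrightarrow> distribution \<pi> \<and> (\<forall>y. (\<Sum>x\<in>UNIV. \<pi> x * P x y) = \<pi> y)"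

fun mpow :: "('a::finite \<Rightarrow> 'a \<Rightarrow> real) \<Rightarrow> nat \<Rightarrow> 'a \<Rightarrow> 'a \<Rightarrow> real" where
  "mpow P 0 x y = (if x = y then 1 else 0)"
| "mpow P (Suc n) x y = (\<Sum>z\<in>UNIV. mpow P n x z * P z y)"

definition tv_dist :: "('a::finite \<Rightarrow> real) \<Rightarrow> ('a \<Rightarrow> real) \<Rightarrow> real" where
  "tv_dist \<mu> \<mu>' = (1/2) * (\<Sum>x\<in>UNIV. \<bar>\<mu> x - \<mu>' x\<bar>)"

definition mixes_within :: "('a::finite \<Rightarrow> 'a \<Rightarrow> real) \<Rightarrow> ('a \<Rightarrow> real) \<Rightarrow> nat \<Rightarrow> bool" where
  "mixes_within P \<pi> n \<longleftrightarrow> Max (range (\<lambda>x. tv_dist (mpow P n x) \<pi>)) \<le> 1/4"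

definition mixing_time :: "('a::finite \<Rightarrow> 'a \<Rightarrow> real) \<Rightarrow> ('a \<Rightarrow> real) \<Rightarrow> nat" where
  "mixing_time P \<pi> = (LEAST n. mixes_within P \<pi> n)"

definition path_prob :: "('a \<Rightarrow> real) \<Rightarrow> ('a \<Rightarrow> 'a \<Rightarrow> real) \<Rightarrow> 'a list \<Rightarrow> real" where
  "path_prob \<nu> P xs = (case xs of [] \<Rightarrow> 1
     | x # _ \<Rightarrow> \<nu> x * (\<Prod>i<length xs - 1. P (xs ! i) (xs ! Suc i)))"

text \<open>P[(X_0,...,X_{n-1}) satisfies E] for the Markov chain with initial law \<nu>, kernel P.\<close>
definition chain_prob :: "('a::finite \<Rightarrow> real) \<Rightarrow> ('a \<Rightarrow> 'a \<Rightarrow> real) \<Rightarrow> nat \<Rightarrow> ('a list \<Rightarrow> bool) \<Rightarrow> real" where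
  "chain_prob \<nu> P n E = (\<Sum>xs\<in>{xs. length xs = n \<and> E xs}. path_prob \<nu> P xs)"

end

theory Submission
  imports Defs
begin

lemma finite_len: "finite {xs :: ('a::finite) list. length xs = n}"
  using finite_lists_length_eq[of "UNIV :: 'a set" n] by simp

definition EE :: "('a::finite \<Rightarrow> real) \<Rightarrow> ('a \<Rightarrow> 'a \<Rightarrow> real) \<Rightarrow> nat \<Rightarrow> ('a list \<Rightarrow> real) \<Rightarrow> real" where
  "EE \<mu> P n g = (\<Sum>xs\<in>{xs. length xs = n}. path_prob \<mu> P xs * g xs)"

lemma path_prob_Cons: "path_prob \<mu> P (x # ys) = \<mu> x * path_prob (P x) P ys"
proof (cases ys)
  case Nil then show ?thesis by (simp add: path_prob_def)
next
  case (Cons y zs)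
  show ?thesis unfolding Cons path_prob_def
    by (simp add: prod.lessThan_Suc_shift del: prod.lessThan_Suc)
qed

lemma len_Suc_image: "{xs. length xs = Suc n} = (\<lambda>(x,ys). x # ys) ` (UNIV \<times> {ys. length ys = n})"
proof (rule set_eqI, rule iffI)
  fix xs :: "'b list" assume "xs \<in> {xs. length xs = Suc n}"
  then obtain x ys where "xs = x # ys" "length ys = n" by (cases xs) auto
  then show "xs \<in> (\<lambda>(x,ys). x # ys) ` (UNIV \<times> {ys. length ys = n})" by force
qed auto

lemma EE_Suc: "EE \<mu> P (Suc n) g = (\<Sum>x\<in>UNIV. \<mu> x * EE (P x) P n (\<lambda>ys. g (x # ys)))"
proof -
  have inj: "inj_on (\<lambda>(x,ys). x # ys) (UNIV \<times> {ys :: 'a list. length ys = n})"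
    by (auto simp: inj_on_def)
  have "EE \<mu> P (Suc n) g = (\<Sum>p\<in>UNIV \<times> {ys. length ys = n}. path_prob \<mu> P (fst p # snd p) * g (fst p # snd p))"
    unfolding EE_def len_Suc_image by (subst sum.reindex[OF inj]) (simp add: case_prod_beta)
  also have "\<dots> = (\<Sum>x\<in>UNIV. \<Sum>ys\<in>{ys. length ys = n}. path_prob \<mu> P (x # ys) * g (x # ys))"
    by (simp add: sum.cartesian_product case_prod_beta)
  also have "\<dots> = (\<Sum>x\<in>UNIV. \<mu> x * EE (P x) P n (\<lambda>ys. g (x # ys)))"
    unfolding EE_def path_prob_Cons by (simp add: sum_distrib_left mult.assoc)
  finally show ?thesis .
qed

lemma EE_0: "EE \<mu> P 0 g = g []"
proof -
  have "{xs :: 'a list. length xs = 0} = {[]}" by auto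
  then show ?thesis by (simp add: EE_def path_prob_def)
qed

fun V :: "('a \<Rightarrow> 'a \<Rightarrow> real) \<Rightarrow> (nat \<Rightarrow> 'a \<Rightarrow> real) \<Rightarrow> nat \<Rightarrow> 'a \<Rightarrow> real" where
  "V P \<phi> 0 x = 1"
| "V P \<phi> (Suc n) x = \<phi> 0 x * (\<Sum>y\<in>UNIV. P x y * V P (\<lambda>i. \<phi> (Suc i)) n y)"

lemma EE_cmult: "EE \<mu> P n (\<lambda>xs. c * h xs) = c * EE \<mu> P n h"
  unfolding EE_def by (simp add: sum_distrib_left algebra_simps)

lemma EE_prod:
  assumes sto: "stochastic P"
  shows "sum \<mu> UNIV = 1 \<Longrightarrow> EE \<mu> P n (\<lambda>xs. \<Prod>i<n. \<phi> i (xs ! i)) = (\<Sum>x\<in>UNIV. \<mu> x * V P \<phi> n x)"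
proof (induction n arbitrary: \<mu> \<phi>)
  case 0
  then show ?case by (simp add: EE_0)
next
  case (Suc n)
  have rows: "sum (P x) UNIV = 1" for x using sto by (simp add: stochastic_def)
  have "EE \<mu> P (Suc n) (\<lambda>xs. \<Prod>i<Suc n. \<phi> i (xs ! i))
     = (\<Sum>x\<in>UNIV. \<mu> x * EE (P x) P n (\<lambda>ys. \<phi> 0 x * (\<Prod>i<n. \<phi> (Suc i) (ys ! i))))"
    by (simp add: EE_Suc prod.lessThan_Suc_shift del: prod.lessThan_Suc)
  also have "\<dots> = (\<Sum>x\<in>UNIV. \<mu> x * (\<phi> 0 x * (\<Sum>y\<in>UNIV. P x y * V P (\<lambda>i. \<phi> (Suc i)) n y)))"
    using Suc.IH[OF rows, of _ "\<lambda>i. \<phi> (Suc i)"] by (simp add: EE_cmult)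
  finally show ?case by simp
qed

lemma mpow_add: "mpow P (m + n) x y = (\<Sum>z\<in>UNIV. mpow P m x z * mpow P n z y)"
proof (induction n arbitrary: y)
  case 0
  show ?case by (simp add: if_distrib cong: if_cong)
next
  case (Suc n)
  have "mpow P (m + Suc n) x y = (\<Sum>w\<in>UNIV. (\<Sum>z\<in>UNIV. mpow P m x z * mpow P n z w) * P w y)"
    by (simp add: Suc.IH)
  also have "\<dots> = (\<Sum>z\<in>UNIV. mpow P m x z * (\<Sum>w\<in>UNIV. mpow P n z w * P w y))"
    by (simp add: sum_distrib_left sum_distrib_right mult.assoc) (rule sum.swap)
  finally show ?case by simp
qed

lemma mpow_1: "mpow P 1 x y = P x y"
proof -
  have "mpow P (Suc 0) x y = (\<Sum>z\<in>UNIV. if x = z then P z y else 0)"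
    by (simp only: mpow.simps, intro sum.cong) auto
  then show ?thesis by simp
qed

lemma mpow_Suc_left: "mpow P (Suc n) x y = (\<Sum>z\<in>UNIV. P x z * mpow P n z y)"
  using mpow_add[of P 1 n x y] by (simp only: mpow_1 plus_1_eq_Suc)

lemma mpow_nonneg: "stochastic P \<Longrightarrow> 0 \<le> mpow P n x y"
  by (induction n arbitrary: y) (auto simp: stochastic_def intro!: sum_nonneg)

lemma mpow_rows: "stochastic P \<Longrightarrow> (\<Sum>y\<in>UNIV. mpow P n x y) = 1"
proof (induction n)
  case 0 then show ?case by simp
next
  case (Suc n)
  have "(\<Sum>y\<in>UNIV. mpow P (Suc n) x y) = (\<Sum>z\<in>UNIV. mpow P n x z * (\<Sum>y\<in>UNIV. P z y))"
    by (simp add: sum_distrib_left) (rule sum.swap)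
  also have "\<dots> = 1" using Suc by (simp add: stochastic_def)
  finally show ?case .
qed

lemma mpow_inv: "invariant P \<pi> \<Longrightarrow> (\<Sum>x\<in>UNIV. \<pi> x * mpow P n x y) = \<pi> y"
proof (induction n arbitrary: y)
  case 0 then show ?case by (simp add: if_distrib cong: if_cong)
next
  case (Suc n)
  have "(\<Sum>x\<in>UNIV. \<pi> x * mpow P (Suc n) x y) = (\<Sum>z\<in>UNIV. (\<Sum>x\<in>UNIV. \<pi> x * mpow P n x z) * P z y)"
    by (simp add: sum_distrib_left sum_distrib_right mult.assoc) (rule sum.swap)
  also have "\<dots> = \<pi> y" using Suc by (simp add: invariant_def)
  finally show ?case .
qed

lemma V_nonneg:
  assumes sto: "stochastic P"
  shows "(\<And>i x. 0 \<le> \<phi> i x) \<Longrightarrow> 0 \<le> V P \<phi> n x"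
proof (induction n arbitrary: \<phi> x)
  case 0 then show ?case by simp
next
  case (Suc n)
  have h: "0 \<le> V P (\<lambda>i. \<phi> (Suc i)) n y" for y
    by (rule Suc.IH) (rule Suc.prems)
  have "0 \<le> (\<Sum>y\<in>UNIV. P x y * V P (\<lambda>i. \<phi> (Suc i)) n y)"
    using sto h by (intro sum_nonneg mult_nonneg_nonneg) (auto simp: stochastic_def)
  then show ?case using Suc.prems[of 0 x] by simp
qed

lemma V_ones:
  assumes sto: "stochastic P"
  shows "(\<And>i. i < n \<Longrightarrow> \<phi> i = (\<lambda>_. 1)) \<Longrightarrow> V P \<phi> n x = 1"
proof (induction n arbitrary: \<phi> x)
  case 0 then show ?case by simp
next
  case (Suc n)
  have h: "V P (\<lambda>i. \<phi> (Suc i)) n y = 1" for y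
    by (rule Suc.IH) (rule Suc.prems, simp)
  have "\<phi> 0 = (\<lambda>_. 1)" by (rule Suc.prems) simp
  then show ?case using sto by (simp add: h stochastic_def)
qed

lemma V_skip:
  assumes sto: "stochastic P"
  shows "m \<le> n \<Longrightarrow> (\<And>i. i < m \<Longrightarrow> \<phi> i = (\<lambda>_. 1)) \<Longrightarrow>
    V P \<phi> n x = (\<Sum>y\<in>UNIV. mpow P m x y * V P (\<lambda>i. \<phi> (i + m)) (n - m) y)"
proof (induction m arbitrary: \<phi> n x)
  case 0
  have "(\<Sum>y\<in>UNIV. mpow P 0 x y * V P (\<lambda>i. \<phi> (i + 0)) (n - 0) y) = (\<Sum>y\<in>UNIV. if x = y then V P \<phi> n y else 0)"
    by (intro sum.cong) auto
  then show ?case by simp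
next
  case (Suc m)
  obtain n' where n': "n = Suc n'" "m \<le> n'" using Suc.prems(1) by (cases n) auto
  have IH: "V P (\<lambda>i. \<phi> (Suc i)) n' y = (\<Sum>z\<in>UNIV. mpow P m y z * V P (\<lambda>i. \<phi> (i + Suc m)) (n - Suc m) z)" for y
  proof -
    have "V P (\<lambda>i. \<phi> (Suc i)) n' y = (\<Sum>z\<in>UNIV. mpow P m y z * V P (\<lambda>i. \<phi> (Suc (i + m))) (n' - m) z)"
      by (rule Suc.IH) (rule n'(2), rule Suc.prems(2), simp)
    then show ?thesis using n' by simp
  qed
  have p0: "\<phi> 0 = (\<lambda>_. 1)" by (rule Suc.prems(2)) simp
  have "V P \<phi> n x = (\<Sum>y\<in>UNIV. P x y * V P (\<lambda>i. \<phi> (Suc i)) n' y)"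
    using p0 n' by simp
  also have "\<dots> = (\<Sum>y\<in>UNIV. \<Sum>z\<in>UNIV. P x y * mpow P m y z * V P (\<lambda>i. \<phi> (i + Suc m)) (n - Suc m) z)"
    unfolding IH by (simp add: sum_distrib_left mult.assoc)
  also have "\<dots> = (\<Sum>z\<in>UNIV. \<Sum>y\<in>UNIV. P x y * mpow P m y z * V P (\<lambda>i. \<phi> (i + Suc m)) (n - Suc m) z)"
    by (rule sum.swap)
  also have "\<dots> = (\<Sum>z\<in>UNIV. mpow P (Suc m) x z * V P (\<lambda>i. \<phi> (i + Suc m)) (n - Suc m) z)"
    by (simp only: mpow_Suc_left sum_distrib_right)
  finally show ?case .
qed

definition cl :: "nat \<Rightarrow> ('a \<Rightarrow> real) \<Rightarrow> nat \<Rightarrow> nat \<Rightarrow> 'a \<Rightarrow> real" where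
  "cl L \<psi> r i x = (if i mod L = r then \<psi> x else 1)"

lemma cl_fun: "cl L \<psi> r i = (\<lambda>x. if i mod L = r then \<psi> x else 1)"
  by (rule ext) (simp add: cl_def)

lemma PW: "(\<Sum>y\<in>UNIV. P x y * (\<Sum>z\<in>UNIV. mpow P m y z * W z)) = (\<Sum>z\<in>UNIV. mpow P (Suc m) x z * W z)"
proof -
  have "(\<Sum>y\<in>UNIV. P x y * (\<Sum>z\<in>UNIV. mpow P m y z * W z)) = (\<Sum>y\<in>UNIV. \<Sum>z\<in>UNIV. P x y * mpow P m y z * W z)"
    by (simp add: sum_distrib_left mult.assoc)
  also have "\<dots> = (\<Sum>z\<in>UNIV. \<Sum>y\<in>UNIV. P x y * mpow P m y z * W z)"
    by (rule sum.swap)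
  also have "\<dots> = (\<Sum>z\<in>UNIV. mpow P (Suc m) x z * W z)"
    by (simp only: mpow_Suc_left sum_distrib_right)
  finally show ?thesis .
qed

lemma V_cl0:
  assumes sto: "stochastic P" and L: "0 < L" and psi: "\<And>x. 0 \<le> \<psi> x"
    and H: "\<And>x y. mpow P L x y \<le> (1 + \<delta>) * \<pi> y" and pinn: "\<And>y. 0 \<le> \<pi> y"
  shows "1 \<le> n \<Longrightarrow> V P (cl L \<psi> 0) n x \<le> \<psi> x * ((1 + \<delta>) * (\<Sum>y\<in>UNIV. \<pi> y * \<psi> y)) ^ ((n - 1) div L)"
proof (induction n arbitrary: x rule: less_induct)
  case (less n)
  define \<rho> where "\<rho> = (1 + \<delta>) * (\<Sum>y\<in>UNIV. \<pi> y * \<psi> y)"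
  obtain n' where n': "n = Suc n'" using less.prems by (cases n) auto
  define \<phi>' where "\<phi>' = (\<lambda>i. cl L \<psi> 0 (Suc i))"
  have Vn: "V P (cl L \<psi> 0) n x = \<psi> x * (\<Sum>y\<in>UNIV. P x y * V P \<phi>' n' y)"
    using n' by (simp add: cl_def \<phi>'_def)
  have clnn: "0 \<le> cl L \<psi> 0 i x" for i x using psi by (simp add: cl_def)
  show ?case
  proof (cases "n' < L")
    case True
    have "V P \<phi>' n' y = 1" for y
    proof (rule V_ones[OF sto])
      fix i assume "i < n'"
      then have "Suc i mod L = Suc i" using True by simp
      then show "\<phi>' i = (\<lambda>_. 1)" by (simp add: \<phi>'_def cl_fun)
    qed
    then have "V P (cl L \<psi> 0) n x = \<psi> x" using Vn sto by (simp add: stochastic_def)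
    moreover have "(n - 1) div L = 0"
      by (intro div_less) (simp add: n'(1) True)
    ultimately show ?thesis by simp
  next
    case False
    have per: "(\<lambda>i. \<phi>' (i + (L - 1))) = cl L \<psi> 0"
    proof
      fix i
      have "Suc (i + (L - 1)) = i + L" using L by simp
      then show "\<phi>' (i + (L - 1)) = cl L \<psi> 0 i" by (simp add: \<phi>'_def cl_fun)
    qed
    have W: "V P \<phi>' n' y = (\<Sum>z\<in>UNIV. mpow P (L - 1) y z * V P (cl L \<psi> 0) (n - L) z)" for y
    proof -
      have "V P \<phi>' n' y = (\<Sum>z\<in>UNIV. mpow P (L - 1) y z * V P (\<lambda>i. \<phi>' (i + (L - 1))) (n' - (L - 1)) z)"
      proof (rule V_skip[OF sto])
        show "L - 1 \<le> n'" using False by simp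
        fix i assume "i < L - 1"
        then have "Suc i mod L = Suc i" by simp
        then show "\<phi>' i = (\<lambda>_. 1)" by (simp add: \<phi>'_def cl_fun)
      qed
      moreover have "n' - (L - 1) = n - L" using n' L False by simp
      ultimately show ?thesis using per by simp
    qed
    have SL: "Suc (L - 1) = L" using L by simp
    have sumV: "(\<Sum>y\<in>UNIV. P x y * V P \<phi>' n' y) = (\<Sum>z\<in>UNIV. mpow P L x z * V P (cl L \<psi> 0) (n - L) z)"
      unfolding W PW SL ..
    have IH: "V P (cl L \<psi> 0) (n - L) z \<le> \<psi> z * \<rho> ^ ((n - L - 1) div L)" for z
      unfolding \<rho>_def by (rule less.IH) (use L False n' in auto)
    have Vnn: "0 \<le> V P (cl L \<psi> 0) (n - L) z" for z by (rule V_nonneg[OF sto clnn])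
    have "(\<Sum>z\<in>UNIV. mpow P L x z * V P (cl L \<psi> 0) (n - L) z) \<le> (\<Sum>z\<in>UNIV. ((1 + \<delta>) * \<pi> z) * (\<psi> z * \<rho> ^ ((n - L - 1) div L)))"
    proof (rule sum_mono)
      fix z
      have Hnn: "0 \<le> (1 + \<delta>) * \<pi> z" using order_trans[OF mpow_nonneg[OF sto] H] .
      show "mpow P L x z * V P (cl L \<psi> 0) (n - L) z \<le> ((1 + \<delta>) * \<pi> z) * (\<psi> z * \<rho> ^ ((n - L - 1) div L))"
        by (rule mult_mono[OF H IH Hnn Vnn])
    qed
    also have "\<dots> = \<rho> * \<rho> ^ ((n - L - 1) div L)"
      unfolding \<rho>_def sum_distrib_right sum_distrib_left by (rule sum.cong) (simp_all add: mult_ac)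
    also have "\<dots> = \<rho> ^ ((n - 1) div L)"
    proof -
      have a: "n - 1 = (n - L - 1) + L" using False n' by linarith
      have b: "((n - L - 1) + L) div L = (n - L - 1) div L + 1"
        by (rule div_add_self2) (use L in simp)
      have "(n - 1) div L = Suc ((n - L - 1) div L)" unfolding a b by simp
      then show ?thesis by simp
    qed
    finally have "(\<Sum>y\<in>UNIV. P x y * V P \<phi>' n' y) \<le> \<rho> ^ ((n - 1) div L)" using sumV by simp
    then have "V P (cl L \<psi> 0) n x \<le> \<psi> x * \<rho> ^ ((n - 1) div L)"
      unfolding Vn by (rule mult_left_mono) (rule psi)
    then show ?thesis unfolding \<rho>_def .
  qed
qed

lemma mod_shift: "r < (L::nat) \<Longrightarrow> ((i + r) mod L = r) = (i mod L = 0)"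
proof -
  assume r: "r < L"
  have q: "i mod L < L" using r by simp
  have e: "(i + r) mod L = (i mod L + r) mod L" by (simp add: mod_add_left_eq)
  show ?thesis
  proof (cases "i mod L + r < L")
    case True then show ?thesis using e by simp
  next
    case False
    have lt: "i mod L + r - L < L" using q r by linarith
    have "(i mod L + r) mod L = (i mod L + r - L) mod L" using False by (intro le_mod_geq) simp
    also have "\<dots> = i mod L + r - L" using lt by (rule mod_less)
    finally have "(i mod L + r) mod L = i mod L + r - L" .
    then have m: "(i + r) mod L = i mod L + r - L" using e by simp
    have "(i + r) mod L \<noteq> r" using m q False by linarith
    moreover have "i mod L \<noteq> 0" using False r by linarith
    ultimately show ?thesis by simp
  qed
qed

lemma V_clr:
  assumes sto: "stochastic P" and r: "r < L" "r \<le> n"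
  shows "V P (cl L \<psi> r) n x = (\<Sum>z\<in>UNIV. mpow P r x z * V P (cl L \<psi> 0) (n - r) z)"
proof -
  have eq: "(\<lambda>i. cl L \<psi> r (i + r)) = cl L \<psi> 0"
    by (rule ext, rule ext) (simp add: cl_def mod_shift[OF r(1)])
  show ?thesis
    by (subst V_skip[OF sto r(2)]) (use r eq in \<open>auto simp: cl_def\<close>)
qed

definition ee :: "('a::finite \<Rightarrow> 'a \<Rightarrow> real) \<Rightarrow> ('a \<Rightarrow> real) \<Rightarrow> nat \<Rightarrow> 'a \<Rightarrow> real" where
  "ee P \<pi> t x = (\<Sum>y\<in>UNIV. \<bar>mpow P t x y - \<pi> y\<bar>)"

lemma prod_expand:
  fixes a b c :: "'b \<Rightarrow> real"
  shows "(\<Sum>z\<in>A. (a z - b z) * (c z - d)) = (\<Sum>z\<in>A. a z * c z) - (\<Sum>z\<in>A. b z * c z) - d * sum a A + d * sum b A"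
proof -
  have "(\<Sum>z\<in>A. (a z - b z) * (c z - d)) = (\<Sum>z\<in>A. (a z * c z - b z * c z) - (d * a z - d * b z))"
    by (rule sum.cong) (simp_all add: algebra_simps)
  also have "\<dots> = (\<Sum>z\<in>A. a z * c z) - (\<Sum>z\<in>A. b z * c z) - (d * sum a A - d * sum b A)"
    by (simp only: sum_subtractf sum_distrib_left)
  finally show ?thesis by simp
qed

lemma mpow_dev:
  assumes sto: "stochastic P" and inv: "invariant P \<pi>"
  shows "mpow P (t + T) x y - \<pi> y = (\<Sum>z\<in>UNIV. (mpow P t x z - \<pi> z) * (mpow P T z y - \<pi> y))"
proof -
  have s1: "sum (mpow P t x) UNIV = 1" using mpow_rows[OF sto] .
  have s2: "sum \<pi> UNIV = 1" using inv by (simp add: invariant_def distribution_def)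
  have s3: "(\<Sum>z\<in>UNIV. \<pi> z * mpow P T z y) = \<pi> y" by (rule mpow_inv[OF inv])
  show ?thesis unfolding prod_expand s1 s2 s3 mpow_add[of P t T] by simp
qed

lemma ee_step:
  assumes sto: "stochastic P" and inv: "invariant P \<pi>" and hT: "\<And>z. ee P \<pi> T z \<le> 1/2"
  shows "ee P \<pi> (t + T) x \<le> ee P \<pi> t x / 2"
proof -
  have "ee P \<pi> (t + T) x = (\<Sum>y\<in>UNIV. \<bar>\<Sum>z\<in>UNIV. (mpow P t x z - \<pi> z) * (mpow P T z y - \<pi> y)\<bar>)"
    unfolding ee_def mpow_dev[OF sto inv] ..
  also have "\<dots> \<le> (\<Sum>y\<in>UNIV. \<Sum>z\<in>UNIV. \<bar>mpow P t x z - \<pi> z\<bar> * \<bar>mpow P T z y - \<pi> y\<bar>)"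
    by (intro sum_mono) (simp add: abs_mult[symmetric] sum_abs)
  also have "\<dots> = (\<Sum>z\<in>UNIV. \<bar>mpow P t x z - \<pi> z\<bar> * ee P \<pi> T z)"
    unfolding ee_def sum_distrib_left by (rule sum.swap)
  also have "\<dots> \<le> (\<Sum>z\<in>UNIV. \<bar>mpow P t x z - \<pi> z\<bar> * (1/2))"
    by (intro sum_mono mult_left_mono hT) simp
  also have "\<dots> = ee P \<pi> t x / 2"
    unfolding ee_def by (simp add: sum_distrib_right)
  finally show ?thesis .
qed

lemma ee_pow:
  assumes sto: "stochastic P" and inv: "invariant P \<pi>" and hT: "\<And>z. ee P \<pi> T z \<le> 1/2"
  shows "ee P \<pi> (Suc j * T) x \<le> (1/2) ^ Suc j"
proof (induction j arbitrary: x)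
  case 0 then show ?case using hT by simp
next
  case (Suc j)
  have "ee P \<pi> (Suc (Suc j) * T) x = ee P \<pi> (Suc j * T + T) x" by (simp add: algebra_simps)
  also have "\<dots> \<le> ee P \<pi> (Suc j * T) x / 2" by (rule ee_step[OF sto inv hT])
  also have "\<dots> \<le> (1/2) ^ Suc j / 2" using Suc.IH[of x] by (simp only: divide_right_mono)
  finally show ?case by simp
qed

lemma abs_le_half:
  fixes v :: "'a::finite \<Rightarrow> real"
  assumes "sum v UNIV = 0"
  shows "\<bar>v y\<bar> \<le> (\<Sum>z\<in>UNIV. \<bar>v z\<bar>) / 2"
proof -
  have a: "sum v UNIV = v y + sum v (UNIV - {y})" by (simp add: sum.remove)
  have b: "(\<Sum>z\<in>UNIV. \<bar>v z\<bar>) = \<bar>v y\<bar> + (\<Sum>z\<in>UNIV - {y}. \<bar>v z\<bar>)" by (simp add: sum.remove)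
  have "\<bar>v y\<bar> = \<bar>sum v (UNIV - {y})\<bar>" using a assms by simp
  also have "\<dots> \<le> (\<Sum>z\<in>UNIV - {y}. \<bar>v z\<bar>)" by (rule sum_abs)
  finally show ?thesis using b by simp
qed

lemma mpow_close:
  assumes sto: "stochastic P" and inv: "invariant P \<pi>"
  shows "\<bar>mpow P t x y - \<pi> y\<bar> \<le> ee P \<pi> t x / 2"
proof -
  have "sum (\<lambda>z. mpow P t x z - \<pi> z) UNIV = 0"
    using mpow_rows[OF sto] inv by (simp add: sum_subtractf invariant_def distribution_def)
  then show ?thesis unfolding ee_def by (rule abs_le_half)
qed

lemma mixes_ee:
  assumes "mixes_within P \<pi> T"
  shows "ee P \<pi> T z \<le> 1/2"
proof -
  have "tv_dist (mpow P T z) \<pi> \<le> Max (range (\<lambda>x. tv_dist (mpow P T x) \<pi>))"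
    by (rule Max_ge) auto
  then have "tv_dist (mpow P T z) \<pi> \<le> 1/4" using assms unfolding mixes_within_def by linarith
  then show ?thesis unfolding tv_dist_def ee_def by simp
qed

lemma class_bound:
  assumes sto: "stochastic P" and L: "0 < L" and psi: "\<And>x. 0 \<le> \<psi> x" and psi2: "\<And>x. \<psi> x \<le> 2"
    and H: "\<And>x y. mpow P L x y \<le> (1 + \<delta>) * \<pi> y" and pinn: "\<And>y. 0 \<le> \<pi> y"
    and rho0: "0 \<le> (1 + \<delta>) * (\<Sum>y\<in>UNIV. \<pi> y * \<psi> y)"
    and rho1: "(1 + \<delta>) * (\<Sum>y\<in>UNIV. \<pi> y * \<psi> y) \<le> 1"
    and nu: "distribution \<nu>" and Ln: "L \<le> n" and r: "r < L"
  shows "(\<Sum>x\<in>UNIV. \<nu> x * V P (cl L \<psi> r) n x) \<le> 2 * ((1 + \<delta>) * (\<Sum>y\<in>UNIV. \<pi> y * \<psi> y)) ^ (n div L - 1)"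
proof -
  define \<rho> where "\<rho> = (1 + \<delta>) * (\<Sum>y\<in>UNIV. \<pi> y * \<psi> y)"
  define C where "C = 2 * \<rho> ^ (n div L - 1)"
  have e: "n div L - 1 \<le> (n - r - 1) div L"
  proof -
    have a: "n = (n - L) + L" using Ln by simp
    have "n div L = (n - L) div L + 1" by (subst a, rule div_add_self2) (use L in simp)
    moreover have "(n - L) div L \<le> (n - r - 1) div L" by (rule div_le_mono) (use r in linarith)
    ultimately show ?thesis by linarith
  qed
  have Vb: "V P (cl L \<psi> 0) (n - r) z \<le> C" for z
  proof -
    have "V P (cl L \<psi> 0) (n - r) z \<le> \<psi> z * \<rho> ^ ((n - r - 1) div L)"
      unfolding \<rho>_def by (rule V_cl0[OF sto L psi H pinn]) (use r Ln in linarith)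
    also have "\<dots> \<le> 2 * \<rho> ^ (n div L - 1)"
      by (intro mult_mono psi2 power_decreasing e) (use rho0 rho1 in \<open>simp_all add: \<rho>_def\<close>)
    finally show ?thesis unfolding C_def .
  qed
  have "(\<Sum>x\<in>UNIV. \<nu> x * V P (cl L \<psi> r) n x) = (\<Sum>x\<in>UNIV. \<nu> x * (\<Sum>z\<in>UNIV. mpow P r x z * V P (cl L \<psi> 0) (n - r) z))"
    using V_clr[OF sto r] r Ln by simp
  also have "\<dots> \<le> (\<Sum>x\<in>UNIV. \<nu> x * (\<Sum>z\<in>UNIV. mpow P r x z * C))"
    using nu by (intro sum_mono mult_left_mono Vb mpow_nonneg[OF sto]) (auto simp: distribution_def)
  also have "\<dots> = C"
    using nu mpow_rows[OF sto] by (simp add: sum_distrib_right[symmetric] sum_distrib_left[symmetric] distribution_def)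
  finally show ?thesis unfolding C_def \<rho>_def .
qed

lemma sum_classes:
  assumes L: "0 < (L::nat)"
  shows "(\<Sum>r<L. \<Sum>i<n. (if i mod L = r then g i else 0)) = (\<Sum>i<n. (g i :: real))"
proof -
  have "(\<Sum>r<L. \<Sum>i<n. (if i mod L = r then g i else 0)) = (\<Sum>i<n. \<Sum>r<L. (if i mod L = r then g i else 0))"
    by (rule sum.swap)
  also have "\<dots> = (\<Sum>i<n. g i)"
  proof (rule sum.cong)
    fix i
    have "i mod L \<in> {..<L}" using L by simp
    then show "(\<Sum>r<L. (if i mod L = r then g i else 0)) = g i" by (simp add: sum.delta)
  qed simp
  finally show ?thesis .
qed

lemma ev_bound:
  assumes L: "0 < L" and mu: "0 \<le> \<mu>"
    and ev: "real n * \<gamma> \<le> (\<Sum>i<n. f (xs ! i))"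
  shows "1 \<le> (1 / real L) * (\<Sum>r<L. \<Prod>i<n. cl L (\<lambda>x. exp (\<mu> * (f x - \<gamma>))) r i (xs ! i))"
proof -
  define s where "s r = (\<Sum>i<n. (if i mod L = r then \<mu> * (f (xs ! i) - \<gamma>) else 0))" for r
  have pe: "(\<Prod>i<n. cl L (\<lambda>x. exp (\<mu> * (f x - \<gamma>))) r i (xs ! i)) = exp (s r)" for r
    unfolding s_def exp_sum[OF finite_lessThan] by (rule prod.cong) (simp_all add: cl_def)
  have "(\<Sum>r<L. s r) = (\<Sum>i<n. \<mu> * (f (xs ! i) - \<gamma>))"
    unfolding s_def by (rule sum_classes[OF L])
  also have "\<dots> = \<mu> * ((\<Sum>i<n. f (xs ! i)) - real n * \<gamma>)"
    by (simp add: sum_distrib_left sum_subtractf algebra_simps)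
  also have "\<dots> \<ge> 0" using mu ev by simp
  finally have s0: "0 \<le> (\<Sum>r<L. s r)" .
  have "real L \<le> (\<Sum>r<L. 1 + s r)" using s0 by (simp add: sum.distrib)
  also have "\<dots> \<le> (\<Sum>r<L. exp (s r))" by (intro sum_mono) (rule exp_ge_add_one_self)
  finally have "real L \<le> (\<Sum>r<L. exp (s r))" .
  then show ?thesis unfolding pe using L by (simp add: field_simps)
qed

lemma pp_nonneg: "distribution \<nu> \<Longrightarrow> stochastic P \<Longrightarrow> 0 \<le> path_prob \<nu> P xs"
  by (cases xs) (auto simp: path_prob_def distribution_def stochastic_def intro!: prod_nonneg mult_nonneg_nonneg)

lemma chain_bound:
  assumes sto: "stochastic P" and nu: "distribution \<nu>" and L: "0 < L" and mu: "0 \<le> \<mu>"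
    and hc: "\<And>r. r < L \<Longrightarrow> (\<Sum>x\<in>UNIV. \<nu> x * V P (cl L (\<lambda>x. exp (\<mu> * (f x - \<gamma>))) r) n x) \<le> C"
  shows "chain_prob \<nu> P n (\<lambda>xs. (\<Sum>i<n. f (xs ! i)) \<ge> real n * \<gamma>) \<le> C"
proof -
  define \<psi> where "\<psi> = (\<lambda>x. exp (\<mu> * (f x - \<gamma>)))"
  define G where "G xs = (1 / real L) * (\<Sum>r<L. \<Prod>i<n. cl L \<psi> r i (xs ! i))" for xs
  define A where "A = {xs :: 'a list. length xs = n}"
  have fin: "finite A" unfolding A_def by (rule finite_len)
  have Gnn: "0 \<le> G xs" for xs
    unfolding G_def cl_def \<psi>_def by (intro mult_nonneg_nonneg sum_nonneg prod_nonneg) auto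
  have "chain_prob \<nu> P n (\<lambda>xs. (\<Sum>i<n. f (xs ! i)) \<ge> real n * \<gamma>)
      = (\<Sum>xs\<in>A. if (\<Sum>i<n. f (xs ! i)) \<ge> real n * \<gamma> then path_prob \<nu> P xs else 0)"
    unfolding chain_prob_def A_def by (subst sum.inter_filter[symmetric]) (simp_all add: finite_len conj_commute)
  also have "\<dots> \<le> (\<Sum>xs\<in>A. path_prob \<nu> P xs * G xs)"
  proof (rule sum_mono)
    fix xs
    have pp: "0 \<le> path_prob \<nu> P xs" by (rule pp_nonneg[OF nu sto])
    show "(if (\<Sum>i<n. f (xs ! i)) \<ge> real n * \<gamma> then path_prob \<nu> P xs else 0) \<le> path_prob \<nu> P xs * G xs"
    proof (cases "(\<Sum>i<n. f (xs ! i)) \<ge> real n * \<gamma>")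
      case True
      have "1 \<le> G xs" unfolding G_def \<psi>_def by (rule ev_bound[OF L mu True])
      then show ?thesis using True pp by (simp add: mult_le_cancel_left1)
    next
      case False then show ?thesis using pp Gnn by simp
    qed
  qed
  also have "\<dots> = (1 / real L) * (\<Sum>r<L. EE \<nu> P n (\<lambda>xs. \<Prod>i<n. cl L \<psi> r i (xs ! i)))"
    unfolding EE_def G_def A_def
    by (simp add: sum_distrib_left mult_ac) (rule sum.swap)
  also have "\<dots> = (1 / real L) * (\<Sum>r<L. \<Sum>x\<in>UNIV. \<nu> x * V P (cl L \<psi> r) n x)"
    using EE_prod[OF sto] nu by (simp add: distribution_def)
  also have "\<dots> \<le> (1 / real L) * (\<Sum>r<L. C)"
    by (intro mult_left_mono sum_mono) (use hc in \<open>auto simp: \<psi>_def\<close>)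
  also have "\<dots> = C" using L by simp
  finally show ?thesis .
qed

lemma exp_quad:
  fixes u :: real
  assumes "\<bar>u\<bar> \<le> 1/2"
  shows "exp u \<le> 1 + u + (2/3) * u\<^sup>2"
proof -
  obtain t where t: "\<bar>t\<bar> \<le> \<bar>u\<bar>" and e: "exp u = (\<Sum>m<3. u ^ m / fact m) + exp t / fact 3 * u ^ 3"
    using Maclaurin_exp_le[of u 3] by blast
  have s: "(\<Sum>m<3. u ^ m / fact m) = 1 + u + u\<^sup>2 / 2"
    by (simp add: eval_nat_numeral power2_eq_square)
  have et: "exp t \<le> 2"
  proof -
    have "exp t \<le> exp (1/2)" using t assms by simp
    also have "\<dots> \<le> 2" by (rule exp_half_le2)
    finally show ?thesis .
  qed
  have "exp t / fact 3 * u ^ 3 \<le> \<bar>exp t / fact 3 * u ^ 3\<bar>" by (rule abs_ge_self)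
  also have "\<dots> = exp t / 6 * (\<bar>u\<bar> * u\<^sup>2)"
    by (simp add: abs_mult power_abs eval_nat_numeral power2_eq_square fact_numeral)
  also have "\<dots> \<le> 2 / 6 * (1/2 * u\<^sup>2)"
    by (intro mult_mono divide_right_mono et) (use assms in auto)
  finally have "exp t / fact 3 * u ^ 3 \<le> u\<^sup>2 / 6" by simp
  then show ?thesis using e s by simp
qed

lemma chain_le1:
  assumes sto: "stochastic P" and nu: "distribution \<nu>"
  shows "chain_prob \<nu> P n Ev \<le> 1"
proof -
  have "chain_prob \<nu> P n Ev \<le> (\<Sum>xs\<in>{xs. length xs = n}. path_prob \<nu> P xs)"
    unfolding chain_prob_def
    by (rule sum_mono2[OF finite_len]) (use pp_nonneg[OF nu sto] in auto)
  also have "\<dots> = EE \<nu> P n (\<lambda>xs. \<Prod>i<n. (\<lambda>i x. 1) i (xs ! i))"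
    unfolding EE_def by simp
  also have "\<dots> = (\<Sum>x\<in>UNIV. \<nu> x * V P (\<lambda>i x. 1) n x)"
    by (rule EE_prod[OF sto]) (use nu in \<open>simp add: distribution_def\<close>)
  also have "\<dots> = 1"
    using V_ones[OF sto, of n "\<lambda>i x. 1"] nu by (simp add: distribution_def)
  finally show ?thesis .
qed

lemma lin_aux: "(F::real) \<le> u - 1 \<Longrightarrow> v - 2 < M - 1 \<Longrightarrow> 2 * u \<le> 3 * v \<Longrightarrow> F / 6 - (M - 1) / 4 \<le> 1"
  by (simp add: field_simps)

theorem theoremA1:
  fixes P :: "'a::finite \<Rightarrow> 'a \<Rightarrow> real" and \<nu> \<pi> f :: "'a \<Rightarrow> real"
    and n :: nat and \<sigma> \<gamma> :: real
  assumes "stochastic P" and "distribution \<nu>" and "invariant P \<pi>"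
    and "\<exists>m. mixes_within P \<pi> m"
    and "n \<ge> 1"
    and "\<forall>x. -1 \<le> f x \<and> f x \<le> 1"
    and "(\<Sum>x\<in>UNIV. \<pi> x * f x) = 0"
    and "(\<Sum>x\<in>UNIV. \<pi> x * (f x)\<^sup>2) \<le> \<sigma>\<^sup>2"
    and "0 < \<gamma>" and "\<gamma> \<le> min (\<sigma>\<^sup>2) (1/2)"
  shows "let T = mixing_time P \<pi>;
             \<pi>\<^sub>s = Min (range \<pi>);
             k = - log 2 (\<pi>\<^sub>s * \<gamma>\<^sup>2 / (6 * \<sigma>\<^sup>2))
         in chain_prob \<nu> P n (\<lambda>xs. (\<Sum>i<n. f (xs ! i)) \<ge> real n * \<gamma>)
            \<le> 4 * exp (- of_int \<lfloor>real n / (k * real T) - 1\<rfloor> * \<gamma>\<^sup>2 / (6 * \<sigma>\<^sup>2))"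
proof -
  note sto = assms(1) and nu = assms(2) and inv = assms(3)
  have fb: "\<And>x. -1 \<le> f x" "\<And>x. f x \<le> 1" using assms(6) by auto
  have pf: "(\<Sum>x\<in>UNIV. \<pi> x * f x) = 0" and pf2: "(\<Sum>x\<in>UNIV. \<pi> x * (f x)\<^sup>2) \<le> \<sigma>\<^sup>2"
    using assms(7,8) .
  have g0: "0 < \<gamma>" and gs: "\<gamma> \<le> \<sigma>\<^sup>2" and gh: "\<gamma> \<le> 1/2" using assms(9,10) by auto
  have pinn: "\<And>y. 0 \<le> \<pi> y" and psum: "sum \<pi> UNIV = 1"
    using inv by (auto simp: invariant_def distribution_def)
  define T where "T = mixing_time P \<pi>"
  define ps where "ps = Min (range \<pi>)"
  define k where "k = - log 2 (ps * \<gamma>\<^sup>2 / (6 * \<sigma>\<^sup>2))"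
  define F where "F = \<lfloor>real n / (k * real T) - 1\<rfloor>"
  define a where "a = \<gamma>\<^sup>2 / \<sigma>\<^sup>2"
  have hT: "mixes_within P \<pi> T"
    unfolding T_def mixing_time_def using assms(4) by (rule LeastI_ex)
  have s0: "0 < \<sigma>\<^sup>2" using g0 gs by linarith
  have a0: "0 < a" unfolding a_def using g0 s0 by simp
  have ah: "a \<le> 1/2"
  proof -
    have "a = \<gamma> * (\<gamma> / \<sigma>\<^sup>2)" unfolding a_def by (simp add: power2_eq_square)
    also have "\<dots> \<le> \<gamma> * 1" using gs s0 g0 by (intro mult_left_mono) auto
    finally show ?thesis using gh by simp
  qed
  have RHS: "- of_int F * \<gamma>\<^sup>2 / (6 * \<sigma>\<^sup>2) = - (of_int F * a / 6)"
    unfolding a_def by simp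
  have goal: "chain_prob \<nu> P n (\<lambda>xs. (\<Sum>i<n. f (xs ! i)) \<ge> real n * \<gamma>) \<le> 4 * exp (- (of_int F * a / 6))"
  proof (cases "F \<le> 0")
    case True
    have "1 \<le> exp (- (of_int F * a / 6))" using True a0
      by (simp add: mult_nonpos_nonneg)
    moreover have "chain_prob \<nu> P n (\<lambda>xs. (\<Sum>i<n. f (xs ! i)) \<ge> real n * \<gamma>) \<le> 1"
      by (rule chain_le1[OF sto nu])
    ultimately show ?thesis by linarith
  next
    case False
    then have F1: "1 \<le> F" by simp
    have Fle: "real_of_int F \<le> real n / (k * real T) - 1" unfolding F_def by (rule of_int_floor_le)
    then have y2: "2 \<le> real n / (k * real T)" using F1 by linarith
    have kT: "0 < k * real T"
    proof (rule ccontr)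
      assume "\<not> 0 < k * real T"
      then have "real n / (k * real T) \<le> 0" by (simp add: divide_nonneg_nonpos)
      then show False using y2 by linarith
    qed
    have T0: "0 < T" using kT by (cases "T = 0") auto
    have k0: "0 < k" using kT T0 by (simp add: zero_less_mult_iff)
    have psle: "ps \<le> \<pi> y" for y unfolding ps_def by (rule Min_le) auto
    have psin: "ps \<in> range \<pi>" unfolding ps_def by (rule Min_in) auto
    have ps0: "0 \<le> ps" using psin pinn by auto
    have ps1: "ps \<le> 1"
    proof -
      obtain y where "ps = \<pi> y" using psin by auto
      moreover have "\<pi> y \<le> sum \<pi> UNIV" by (rule member_le_sum) (use pinn in auto)
      ultimately show ?thesis using psum by simp
    qed
    define q where "q = ps * a / 6"
    have kq: "k = - log 2 q" unfolding k_def q_def a_def by (simp add: field_simps)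
    have q0: "0 < q"
    proof (rule ccontr)
      assume "\<not> 0 < q"
      then have "q = 0" unfolding q_def using ps0 a0 by (auto simp: zero_less_mult_iff)
      then show False using k0 kq by (simp add: log_def)
    qed
    have q8: "q \<le> 1/8"
    proof -
      have "ps * a \<le> 1 * (1/2)" using ps1 ah ps0 a0 by (intro mult_mono) auto
      then show ?thesis unfolding q_def by (simp add: mult.commute)
    qed
    have k3: "3 \<le> k"
    proof -
      have "log 2 q \<le> log 2 (1/8)" using q0 q8 by simp
      also have "log 2 (1/8::real) = -3"
      proof -
        have e: "(2::real) powr (-3) = 1/8" by (simp add: powr_minus powr_numeral)
        have "log 2 (1/8::real) = log 2 (2 powr (-3))" unfolding e ..
        also have "\<dots> = -3" by (rule log_powr_cancel) auto
        finally show ?thesis .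
      qed
      finally show ?thesis unfolding kq by simp
    qed
    define j where "j = nat \<lceil>k\<rceil>"
    have jk: "k \<le> real j" and jk1: "real j < k + 1" unfolding j_def using k0 by linarith+
    have j1: "1 \<le> j" using jk k3 by linarith
    define L where "L = j * T"
    have L0: "0 < L" unfolding L_def using j1 T0 by simp
    have hee: "\<And>z. ee P \<pi> T z \<le> 1/2" by (rule mixes_ee[OF hT])
    have H: "mpow P L x y \<le> (1 + a / 12) * \<pi> y" for x y
    proof -
      have "L = Suc (j - 1) * T" unfolding L_def using j1 by simp
      then have "ee P \<pi> L x \<le> (1/2) ^ j" using ee_pow[OF sto inv hee, of "j - 1" x] j1 by simp
      also have "(1/2::real) ^ j = 2 powr (- real j)"
        by (simp add: powr_minus powr_realpow power_one_over inverse_eq_divide)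
      also have "\<dots> \<le> 2 powr (- k)" using jk by simp
      also have "2 powr (- k) = q" unfolding kq using q0 by simp
      finally have "ee P \<pi> L x \<le> q" .
      moreover have "\<bar>mpow P L x y - \<pi> y\<bar> \<le> ee P \<pi> L x / 2" by (rule mpow_close[OF sto inv])
      ultimately have "mpow P L x y \<le> \<pi> y + q / 2" by linarith
      also have "q / 2 \<le> \<pi> y * a / 12" unfolding q_def using psle[of y] a0 by (simp add: mult_right_mono)
      finally show ?thesis by (simp add: algebra_simps)
    qed
    define \<mu> where "\<mu> = \<gamma> / (2 * \<sigma>\<^sup>2)"
    have mu0: "0 \<le> \<mu>" unfolding \<mu>_def using g0 s0 by simp
    have muh: "\<mu> \<le> 1/2" unfolding \<mu>_def using gs s0 by simp
    define \<psi> where "\<psi> = (\<lambda>x. exp (\<mu> * (f x - \<gamma>)))"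
    have psi0: "\<And>x. 0 \<le> \<psi> x" unfolding \<psi>_def by simp
    have psi2: "\<psi> x \<le> 2" for x
    proof -
      have "\<mu> * (f x - \<gamma>) \<le> \<mu> * 1"
        using mu0 fb(2)[of x] g0 by (intro mult_left_mono) auto
      then have "\<mu> * (f x - \<gamma>) \<le> 1/2" using muh by linarith
      then have "\<psi> x \<le> exp (1/2)" unfolding \<psi>_def by simp
      also have "\<dots> \<le> 2" by (rule exp_half_le2)
      finally show ?thesis .
    qed
    define A where "A = (\<Sum>y\<in>UNIV. \<pi> y * \<psi> y)"
    have A0: "0 \<le> A" unfolding A_def using pinn psi0 by (intro sum_nonneg mult_nonneg_nonneg) auto
    have Aexp: "A \<le> exp (- a / 3)"
    proof -
      have ex: "exp (\<mu> * f y) \<le> 1 + \<mu> * f y + (2/3) * (\<mu>\<^sup>2 * (f y)\<^sup>2)" for y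
      proof -
        have "\<bar>\<mu> * f y\<bar> \<le> 1/2 * 1" unfolding abs_mult using mu0 muh fb[of y]
          by (intro mult_mono) auto
        then show ?thesis using exp_quad[of "\<mu> * f y"] by (simp add: power_mult_distrib)
      qed
      have "A = exp (- \<mu> * \<gamma>) * (\<Sum>y\<in>UNIV. \<pi> y * exp (\<mu> * f y))"
        unfolding A_def \<psi>_def sum_distrib_left
        by (rule sum.cong) (simp_all add: exp_add[symmetric] algebra_simps)
      also have "(\<Sum>y\<in>UNIV. \<pi> y * exp (\<mu> * f y)) \<le> (\<Sum>y\<in>UNIV. \<pi> y * (1 + \<mu> * f y + (2/3) * (\<mu>\<^sup>2 * (f y)\<^sup>2)))"
        by (intro sum_mono mult_left_mono ex pinn)
      also have "\<dots> = sum \<pi> UNIV + \<mu> * (\<Sum>y\<in>UNIV. \<pi> y * f y) + (2/3) * \<mu>\<^sup>2 * (\<Sum>y\<in>UNIV. \<pi> y * (f y)\<^sup>2)"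
        by (simp add: algebra_simps sum.distrib sum_distrib_left)
      also have "\<dots> \<le> 1 + (2/3) * \<mu>\<^sup>2 * \<sigma>\<^sup>2"
        using psum pf pf2 by (simp add: mult_left_mono)
      also have "\<dots> = 1 + a / 6"
        unfolding \<mu>_def a_def using s0 by (simp add: field_simps power2_eq_square)
      also have "\<dots> \<le> exp (a / 6)" by (rule exp_ge_add_one_self)
      finally have "A \<le> exp (- \<mu> * \<gamma>) * exp (a / 6)" by (simp add: mult_left_mono)
      also have "- \<mu> * \<gamma> = - a / 2"
        unfolding \<mu>_def a_def using s0 by (simp add: field_simps power2_eq_square)
      also have "exp (- a / 2) * exp (a / 6) = exp (- a / 3)" by (simp add: exp_add[symmetric])
      finally show ?thesis .
    qed
    define \<rho> where "\<rho> = (1 + a / 12) * A"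
    have rho0: "0 \<le> \<rho>" unfolding \<rho>_def using a0 A0 by simp
    have rhoe: "\<rho> \<le> exp (- a / 4)"
    proof -
      have "\<rho> \<le> exp (a / 12) * exp (- a / 3)"
        unfolding \<rho>_def using Aexp A0 a0 exp_ge_add_one_self[of "a/12"]
        by (intro mult_mono) auto
      also have "\<dots> = exp (- a / 4)" by (simp add: exp_add[symmetric])
      finally show ?thesis .
    qed
    have rho1: "\<rho> \<le> 1" using rhoe a0 by (smt (verit) exp_le_one_iff divide_neg_pos)
    have nk: "2 * k * real T \<le> real n" using y2 kT by (simp add: field_simps)
    have Ln: "L \<le> n"
    proof -
      have "real L = real j * real T" unfolding L_def by simp
      also have "\<dots> \<le> (k + 1) * real T" using jk1 by (intro mult_right_mono) auto
      also have "\<dots> \<le> 2 * k * real T" using k3 by (intro mult_right_mono) auto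
      finally show ?thesis using nk by linarith
    qed
    define m where "m = n div L"
    have m1: "1 \<le> m"
    proof -
      have "L div L \<le> n div L" using Ln by (rule div_le_mono)
      then show ?thesis unfolding m_def using L0 by simp
    qed
    have cls: "(\<Sum>x\<in>UNIV. \<nu> x * V P (cl L \<psi> r) n x) \<le> 2 * \<rho> ^ (m - 1)" if r: "r < L" for r
      unfolding \<rho>_def A_def m_def
      by (rule class_bound[OF sto L0 psi0 psi2 H pinn _ _ nu Ln r])
        (use rho0 rho1 in \<open>simp_all add: \<rho>_def A_def\<close>)
    have cp: "chain_prob \<nu> P n (\<lambda>xs. (\<Sum>i<n. f (xs ! i)) \<ge> real n * \<gamma>) \<le> 2 * \<rho> ^ (m - 1)"
      by (rule chain_bound[OF sto nu L0 mu0]) (use cls in \<open>simp add: \<psi>_def\<close>)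
    have "\<rho> ^ (m - 1) \<le> exp (- a / 4) ^ (m - 1)" by (intro power_mono rhoe rho0)
    also have "\<dots> = exp (real (m - 1) * (- a / 4))" by (rule exp_of_nat_mult[symmetric])
    finally have rp: "\<rho> ^ (m - 1) \<le> exp (real (m - 1) * (- a / 4))" .
    define y where "y = real n / real T"
    have y0: "0 \<le> y" unfolding y_def by simp
    have Fy: "real_of_int F \<le> y / k - 1" using Fle unfolding y_def by (simp add: field_simps)
    have my: "y / real j - 2 < real m - 1"
    proof -
      have "real n = real (n div L * L + n mod L)" by simp
      also have "\<dots> = real m * real L + real (n mod L)" unfolding m_def by (simp only: of_nat_add of_nat_mult)
      finally have e: "real n = real m * real L + real (n mod L)" .
      have "n mod L < L" using L0 by simp
      then have "real (n mod L) < real L" by simp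
      then have "real n < (real m + 1) * real L" using e by (simp add: algebra_simps)
      then have "real n / real L < real m + 1" using L0 by (simp add: field_simps)
      moreover have "real n / real L = y / real j" unfolding y_def L_def by (simp add: field_simps)
      ultimately show ?thesis by linarith
    qed
    have kj: "2 * (y / k) \<le> 3 * (y / real j)"
    proof -
      have "2 * real j \<le> 3 * k" using jk1 k3 by linarith
      then have "2 / k \<le> 3 / real j" using k0 j1 by (simp add: field_simps)
      then have "y * (2 / k) \<le> y * (3 / real j)" using y0 by (rule mult_left_mono)
      then show ?thesis by (simp add: mult.commute)
    qed
    have rm1: "real (m - 1) = real m - 1" using m1 by simp
    define X where "X = real_of_int F / 6 - real (m - 1) / 4"
    have X1: "X \<le> 1" unfolding X_def rm1 by (rule lin_aux[OF Fy my kj])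
    have aX: "a * X \<le> 1/2"
    proof -
      have "a * X \<le> a * 1" using X1 a0 by (intro mult_left_mono) auto
      then show ?thesis using ah by linarith
    qed
    have "exp (real (m - 1) * (- a / 4)) = exp (a * X) * exp (- (of_int F * a / 6))"
    proof -
      have "real (m - 1) * (- a / 4) = a * X + (- (of_int F * a / 6))"
        unfolding X_def by (simp add: field_simps)
      then show ?thesis by (simp only: exp_add)
    qed
    also have "\<dots> \<le> 2 * exp (- (of_int F * a / 6))"
    proof (rule mult_right_mono)
      have "exp (a * X) \<le> exp (1/2)" using aX by simp
      then show "exp (a * X) \<le> 2" using exp_half_le2 by linarith
    qed simp
    finally have "exp (real (m - 1) * (- a / 4)) \<le> 2 * exp (- (of_int F * a / 6))" .
    then show ?thesis using cp rp by linarith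
  qed
  show ?thesis unfolding Let_def T_def[symmetric] ps_def[symmetric] k_def[symmetric] F_def[symmetric] RHS
    by (rule goal)
qed

end
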